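(* Let $\mathrm W_\Omega$ be the Whitney decomposition of $\Omega=\mathbb G\setminus\mathbb A$ into dyadic rectangles as described below. For $Q\in\mathrm W_\Omega$ let $Q^*$ be the union of all rectangles of $\mathrm W_\Omega$ touching $Q$, and $Q^{**}$ the union of all rectangles of $\mathrm W_\Omega$ touching $Q^*$. Then there are $L\ge1$ and $N'\in\mathbb N$ such that for every $Q\in\mathrm W_\Omega$ the set $Q^{**}$, with the metric $d_{cc}$, admits an $L$-bi-Lipschitz embedding into $\mathbb R^{N'}$.
   Context: The Grushin plane $\mathbb G$ is $\mathbb R^2$ with horizontal distribution spanned by $X_1=\partial_x$ and $X_2=x\,\partial_y$, with Carnot–Carathéodory distance $d_{cc}$ (infimum of $\int_0^1\sqrt{a^2+b^2}\,dt$ over absolutely continuous curves $(\mathrm x,\mathrm y)$ with $\mathrm x'=a$, $\mathrm y'=\mathrm x\,b$ joining the points). $\mathbb A=\{0\}\times\mathbb R$. $\mathrm W_\Omega$ is a family of rectangles from the meshes $M_j=2^{-j}M_0\times2^{-2j}M_0$ ($M_0$ the unit square lattice mesh, so $M_j$ consists of rectangles $[2^{-j}m,2^{-j}(m+1)]\times[2^{-2j}n,2^{-2j}(n+1)]$), with union $\Omega=\mathbb G\setminus\mathbb A$, pairwise disjoint interiors, and $\operatorname{dist}_{cc}(Q,\mathbb A)\le\operatorname{diam}_{cc}(Q)\le 8\operatorname{dist}_{cc}(Q,\mathbb A)$. *)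

theory Defs
  imports "HOL-Analysis.Analysis"
begin

text \<open>Horizontal curves of the Grushin plane, encoded by their controls a, b:
  x' = a, y' = x b, i.e. the absolutely continuous curve is recovered by integration.\<close>
definition grushin_horizontal ::
  "(real \<times> real) \<Rightarrow> (real \<times> real) \<Rightarrow> (real \<Rightarrow> real) \<Rightarrow> (real \<Rightarrow> real) \<Rightarrow> (real \<Rightarrow> real) \<Rightarrow> (real \<Rightarrow> real) \<Rightarrow> bool"
  where "grushin_horizontal p q cx cy a b \<longleftrightarrow>
     a absolutely_integrable_on {0..1} \<and> b absolutely_integrable_on {0..1} \<and>
     (\<lambda>t. cx t * b t) absolutely_integrable_on {0..1} \<and>
     (\<forall>t\<in>{0..1}. cx t = fst p + integral {0..t} a) \<and>
     (\<forall>t\<in>{0..1}. cy t = snd p + integral {0..t} (\<lambda>s. cx s * b s)) \<and>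
     cx 1 = fst q \<and> cy 1 = snd q"

definition dcc :: "(real \<times> real) \<Rightarrow> (real \<times> real) \<Rightarrow> real" where
  "dcc p q = Inf {integral {0..1} (\<lambda>t. sqrt ((a t)\<^sup>2 + (b t)\<^sup>2)) | cx cy a b.
                    grushin_horizontal p q cx cy a b}"

definition axisA :: "(real \<times> real) set" where
  "axisA = {p. fst p = 0}"

definition Omega :: "(real \<times> real) set" where
  "Omega = {p. fst p \<noteq> 0}"

definition dyadic_rect :: "int \<Rightarrow> int \<Rightarrow> int \<Rightarrow> (real \<times> real) set" where
  "dyadic_rect j m n = {2 powr (- real_of_int j) * real_of_int m .. 2 powr (- real_of_int j) * (real_of_int m + 1)}
                     \<times> {2 powr (- 2 * real_of_int j) * real_of_int n .. 2 powr (- 2 * real_of_int j) * (real_of_int n + 1)}"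

definition dist_cc :: "(real \<times> real) set \<Rightarrow> (real \<times> real) set \<Rightarrow> real" where
  "dist_cc S T = Inf {dcc p q | p q. p \<in> S \<and> q \<in> T}"

definition diam_cc :: "(real \<times> real) set \<Rightarrow> real" where
  "diam_cc S = Sup {dcc p q | p q. p \<in> S \<and> q \<in> S}"

definition whitney_family :: "(real \<times> real) set set \<Rightarrow> bool" where
  "whitney_family W \<longleftrightarrow>
     (\<forall>Q\<in>W. \<exists>j m n. Q = dyadic_rect j m n) \<and>
     \<Union>W = Omega \<and>
     (\<forall>Q\<in>W. \<forall>Q'\<in>W. Q \<noteq> Q' \<longrightarrow> interior Q \<inter> interior Q' = {}) \<and>
     (\<forall>Q\<in>W. dist_cc Q axisA \<le> diam_cc Q \<and> diam_cc Q \<le> 8 * dist_cc Q axisA)"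

definition touching_union :: "(real \<times> real) set set \<Rightarrow> (real \<times> real) set \<Rightarrow> (real \<times> real) set" where
  "touching_union W S = \<Union>{Q'\<in>W. Q' \<inter> S \<noteq> {}}"

definition eucl_dist :: "nat \<Rightarrow> (nat \<Rightarrow> real) \<Rightarrow> (nat \<Rightarrow> real) \<Rightarrow> real" where
  "eucl_dist N u v = sqrt (\<Sum>i<N. (u i - v i)\<^sup>2)"

text \<open>f is an L-bi-Lipschitz embedding of (S, dcc) into R^N (points of R^N are
  the first N coordinates of a nat-indexed vector).\<close>
definition bilip_embedding :: "real \<Rightarrow> nat \<Rightarrow> (real \<times> real) set \<Rightarrow> ((real \<times> real) \<Rightarrow> nat \<Rightarrow> real) \<Rightarrow> bool" where
  "bilip_embedding L N S f \<longleftrightarrow>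
     (\<forall>p\<in>S. \<forall>q\<in>S. dcc p q / L \<le> eucl_dist N (f p) (f q) \<and> eucl_dist N (f p) (f q) \<le> L * dcc p q)"

end

theory Submission
  imports Defs
begin
lemma ai_len:
  fixes a b :: "real \<Rightarrow> real"
  assumes "a absolutely_integrable_on S" "b absolutely_integrable_on S"
  shows "(\<lambda>t. sqrt ((a t)\<^sup>2 + (b t)\<^sup>2)) absolutely_integrable_on S"
proof -
  have "(\<lambda>t. (a t, b t)) absolutely_integrable_on S"
  proof (subst absolutely_integrable_componentwise_iff, intro ballI)
    fix u :: "real \<times> real" assume "u \<in> Basis"
    then have "u = (1,0) \<or> u = (0,1)" by (auto simp: Basis_prod_def)
    then show "(\<lambda>t. (a t, b t) \<bullet> u) absolutely_integrable_on S"
      using assms by (auto simp: inner_prod_def)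
  qed
  from absolutely_integrable_norm[OF this] show ?thesis
    by (simp add: o_def norm_Pair)
qed

lemma curve_bounds:
  assumes H: "grushin_horizontal p q cx cy a b"
  defines "len \<equiv> integral {0..1} (\<lambda>t. sqrt ((a t)\<^sup>2 + (b t)\<^sup>2))"
  shows "0 \<le> len" "\<bar>fst q - fst p\<bar> \<le> len" "\<bar>snd q - snd p\<bar> \<le> (\<bar>fst p\<bar> + len) * len"
proof -
  define g where "g = (\<lambda>t. sqrt ((a t)\<^sup>2 + (b t)\<^sup>2))"
  have aa: "a absolutely_integrable_on {0..1}" and ba: "b absolutely_integrable_on {0..1}"
    and ca: "(\<lambda>t. cx t * b t) absolutely_integrable_on {0..1}"
    and cxe: "\<forall>t\<in>{0..1}. cx t = fst p + integral {0..t} a"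
    and cye: "\<forall>t\<in>{0..1}. cy t = snd p + integral {0..t} (\<lambda>s. cx s * b s)"
    and e1: "cx 1 = fst q" "cy 1 = snd q"
    using H unfolding grushin_horizontal_def by auto
  have gi: "g integrable_on {0..1}"
    using ai_len[OF aa ba] unfolding g_def absolutely_integrable_on_def by blast
  have ai: "a integrable_on {0..1}" using aa absolutely_integrable_on_def by blast
  have ci: "(\<lambda>t. cx t * b t) integrable_on {0..1}" using ca absolutely_integrable_on_def by blast
  have g0: "\<And>t. 0 \<le> g t" unfolding g_def by simp
  show l0: "0 \<le> len" unfolding len_def g_def[symmetric] by (rule integral_nonneg[OF gi]) (simp add: g0)
  have ag: "\<And>t. norm (a t) \<le> g t" unfolding g_def by (simp add: real_sqrt_ge_abs1)
  have bg: "\<And>t. \<bar>b t\<bar> \<le> g t" unfolding g_def by (simp add: real_sqrt_ge_abs2)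
  have "fst q - fst p = integral {0..1} a" using cxe e1 by auto
  then show "\<bar>fst q - fst p\<bar> \<le> len"
    using integral_norm_bound_integral[OF ai gi ag] unfolding len_def g_def by simp
  define M where "M = \<bar>fst p\<bar> + len"
  have cxb: "\<bar>cx t\<bar> \<le> M" if t: "t \<in> {0..1}" for t
  proof -
    have sub: "{0..t} \<subseteq> {0..1}" using t by auto
    have ait: "a integrable_on {0..t}" using integrable_on_subinterval[OF ai sub] .
    have git: "g integrable_on {0..t}" using integrable_on_subinterval[OF gi sub] .
    have "\<bar>integral {0..t} a\<bar> \<le> integral {0..t} g"
      using integral_norm_bound_integral[OF ait git ag] by simp
    also have "\<dots> \<le> integral {0..1} g"
      using integral_subset_le[OF sub git gi] g0 by blast
    finally show ?thesis using cxe t unfolding M_def len_def g_def by auto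
  qed
  have "snd q - snd p = integral {0..1} (\<lambda>s. cx s * b s)" using cye e1 by auto
  moreover have "norm (integral {0..1} (\<lambda>s. cx s * b s)) \<le> integral {0..1} (\<lambda>t. M * g t)"
  proof (rule integral_norm_bound_integral[OF ci integrable_on_mult_right[OF gi]])
    fix t :: real assume t: "t \<in> {0..1}"
    have "\<bar>cx t\<bar> * \<bar>b t\<bar> \<le> M * g t"
      by (rule mult_mono[OF cxb[OF t] bg]) (auto simp: M_def l0)
    then show "norm (cx t * b t) \<le> M * g t" by (simp add: abs_mult)
  qed
  ultimately show "\<bar>snd q - snd p\<bar> \<le> (\<bar>fst p\<bar> + len) * len"
    unfolding integral_mult_right M_def len_def g_def by simp
qed
lemma explicit_curve:
  assumes s: "fst p + fst q \<noteq> 0"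
  defines "\<beta> \<equiv> 2 * (snd q - snd p) / (fst p + fst q)"
  shows "\<exists>cx cy a b. grushin_horizontal p q cx cy a b \<and>
     integral {0..1} (\<lambda>t. sqrt ((a t)\<^sup>2 + (b t)\<^sup>2)) = sqrt ((fst q - fst p)\<^sup>2 + \<beta>\<^sup>2)"
proof -
  define dx where "dx = fst q - fst p"
  define cx where "cx = (\<lambda>t::real. fst p + t * dx)"
  define cy where "cy = (\<lambda>t::real. snd p + \<beta> * (fst p * t + dx * t\<^sup>2 / 2))"
  have i1: "integral {0..t} (\<lambda>s. dx) = t * dx" if "0 \<le> t" for t
    using that by simp
  have i2: "integral {0..t} (\<lambda>s. cx s * \<beta>) = \<beta> * (fst p * t + dx * t\<^sup>2 / 2)" if "0 \<le> t" for t
  proof -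
    have "((\<lambda>s. cx s * \<beta>) has_integral
        (\<lambda>s. \<beta> * (fst p * s + dx * s\<^sup>2 / 2)) t - (\<lambda>s. \<beta> * (fst p * s + dx * s\<^sup>2 / 2)) 0) {0..t}"
    proof (rule fundamental_theorem_of_calculus[OF that])
      fix x assume "x \<in> {0..t}"
      have "((\<lambda>s. \<beta> * (fst p * s + dx * s\<^sup>2 / 2)) has_real_derivative cx x * \<beta>) (at x within {0..t})"
        unfolding cx_def by (auto intro!: derivative_eq_intros simp: algebra_simps)
      then show "((\<lambda>s. \<beta> * (fst p * s + dx * s\<^sup>2 / 2)) has_vector_derivative cx x * \<beta>) (at x within {0..t})"
        by (simp add: has_real_derivative_iff_has_vector_derivative)
    qed
    then show ?thesis by (rule integral_unique[THEN trans]) simp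
  qed
  have "grushin_horizontal p q cx cy (\<lambda>t. dx) (\<lambda>t. \<beta>)"
    unfolding grushin_horizontal_def
  proof (intro conjI ballI)
    show "(\<lambda>t::real. dx) absolutely_integrable_on {0..1}"
      by (intro absolutely_integrable_continuous_real continuous_intros)
    show "(\<lambda>t::real. \<beta>) absolutely_integrable_on {0..1}"
      by (intro absolutely_integrable_continuous_real continuous_intros)
    show "(\<lambda>t. cx t * \<beta>) absolutely_integrable_on {0..1}"
      unfolding cx_def by (intro absolutely_integrable_continuous_real continuous_intros)
    fix t :: real assume t: "t \<in> {0..1}"
    show "cx t = fst p + integral {0..t} (\<lambda>t. dx)" using i1[of t] t by (simp add: cx_def)
    show "cy t = snd p + integral {0..t} (\<lambda>s. cx s * \<beta>)" using i2[of t] t by (simp add: cy_def del: integral_mult_left integral_mult_right)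
  next
    show "cx 1 = fst q" by (simp add: cx_def dx_def)
    have "\<beta> * (fst p + dx / 2) = snd q - snd p"
      using s unfolding \<beta>_def dx_def by (simp add: field_simps)
    then show "cy 1 = snd q" by (simp add: cy_def algebra_simps)
  qed
  moreover have "integral {0..1} (\<lambda>t::real. sqrt (((\<lambda>t::real. dx) t)\<^sup>2 + ((\<lambda>t::real. \<beta>) t)\<^sup>2)) = sqrt ((fst q - fst p)\<^sup>2 + \<beta>\<^sup>2)"
    by (simp add: dx_def)
  ultimately show ?thesis by blast
qed
lemma dcc_le:
  assumes s: "fst p + fst q \<noteq> 0"
  shows "dcc p q \<le> sqrt ((fst q - fst p)\<^sup>2 + (2 * (snd q - snd p) / (fst p + fst q))\<^sup>2)"
proof -
  obtain cx cy a b where H: "grushin_horizontal p q cx cy a b" and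
    E: "integral {0..1} (\<lambda>t. sqrt ((a t)\<^sup>2 + (b t)\<^sup>2)) = sqrt ((fst q - fst p)\<^sup>2 + (2 * (snd q - snd p) / (fst p + fst q))\<^sup>2)"
    using explicit_curve[OF s] by blast
  show ?thesis unfolding dcc_def
  proof (rule cInf_lower)
    show "sqrt ((fst q - fst p)\<^sup>2 + (2 * (snd q - snd p) / (fst p + fst q))\<^sup>2) \<in> {integral {0..1} (\<lambda>t. sqrt ((a t)\<^sup>2 + (b t)\<^sup>2)) | cx cy a b. grushin_horizontal p q cx cy a b}"
      using H E by (intro CollectI exI[of _ cx] exI[of _ cy] exI[of _ a] exI[of _ b]) simp
    show "bdd_below {integral {0..1} (\<lambda>t. sqrt ((a t)\<^sup>2 + (b t)\<^sup>2)) | cx cy a b. grushin_horizontal p q cx cy a b}"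
      by (rule bdd_belowI[of _ 0]) (auto dest: curve_bounds(1))
  qed
qed

lemma dcc_ge:
  assumes s: "fst p + fst q \<noteq> 0"
    and B: "\<And>cx cy a b. grushin_horizontal p q cx cy a b \<Longrightarrow> B \<le> integral {0..1} (\<lambda>t. sqrt ((a t)\<^sup>2 + (b t)\<^sup>2))"
  shows "B \<le> dcc p q"
  unfolding dcc_def
proof (rule cInf_greatest)
  show "{integral {0..1} (\<lambda>t. sqrt ((a t)\<^sup>2 + (b t)\<^sup>2)) | cx cy a b. grushin_horizontal p q cx cy a b} \<noteq> {}"
    using explicit_curve[OF s] by blast
qed (use B in blast)

lemma dcc_ge_dx:
  assumes s: "fst p + fst q \<noteq> 0"
  shows "\<bar>fst q - fst p\<bar> \<le> dcc p q"
  by (rule dcc_ge[OF s]) (rule curve_bounds(2))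

lemma aux_ineq: "(C::real) \<le> (D::real) \<Longrightarrow> D = 81 * (B::real) \<Longrightarrow> (X::real) = (A::real) \<Longrightarrow> 0 \<le> A \<Longrightarrow> X + C \<le> 81 * (A + B)" by (simp add: distrib_left)

lemma region:
  assumes h: "h > 0"
    and xp: "h/9 \<le> \<bar>fst p\<bar>" "\<bar>fst p\<bar> \<le> 27*h"
    and xq: "h/9 \<le> \<bar>fst q\<bar>" "\<bar>fst q\<bar> \<le> 27*h"
    and sg: "fst p * fst q > 0"
    and dy: "\<bar>snd p - snd q\<bar> \<le> 182 * h\<^sup>2"
  defines "E \<equiv> sqrt ((fst p - fst q)\<^sup>2 + (snd p / h - snd q / h)\<^sup>2)"
  shows "dcc p q / 183 \<le> E \<and> E \<le> 183 * dcc p q"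
proof
  have sabs: "\<bar>fst p + fst q\<bar> = \<bar>fst p\<bar> + \<bar>fst q\<bar>"
    using sg by (cases "fst p > 0") (auto simp: zero_less_mult_iff)
  then have sge: "\<bar>fst p + fst q\<bar> \<ge> 2*h/9" using xp xq by linarith
  then have s: "fst p + fst q \<noteq> 0" using h by auto
  have Ele: "E \<le> \<bar>fst p - fst q\<bar> + \<bar>snd p / h - snd q / h\<bar>"
    unfolding E_def by (rule sqrt_sum_squares_le_sum_abs)
  have dyh: "\<bar>snd p / h - snd q / h\<bar> = \<bar>snd q - snd p\<bar> / h"
    using h by (simp add: diff_divide_distrib[symmetric] abs_minus_commute)
  show "E \<le> 183 * dcc p q"
  proof -
    have "E / 183 \<le> dcc p q"
    proof (rule dcc_ge[OF s])
      fix cx cy a b assume H: "grushin_horizontal p q cx cy a b"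
      define l where "l = integral {0..1} (\<lambda>t. sqrt ((a t)\<^sup>2 + (b t)\<^sup>2))"
      have l0: "0 \<le> l" and bx: "\<bar>fst q - fst p\<bar> \<le> l" and yb: "\<bar>snd q - snd p\<bar> \<le> (\<bar>fst p\<bar> + l) * l"
        using curve_bounds[OF H] unfolding l_def by auto
      have "\<bar>snd q - snd p\<bar> \<le> 182 * h * l"
      proof (cases "l \<le> h")
        case True
        have "(\<bar>fst p\<bar> + l) * l \<le> (28 * h) * l"
          by (rule mult_right_mono) (use True xp l0 in auto)
        then show ?thesis using yb h l0
          by (smt (verit) mult_right_mono)
      next
        case False
        have "182 * h * h \<le> 182 * h * l" using False h by (intro mult_left_mono) auto
        then show ?thesis using dy by (simp add: power2_eq_square abs_minus_commute)
      qed
      then have "\<bar>snd q - snd p\<bar> / h \<le> 182 * l" using h by (simp add: divide_le_eq mult.commute mult.left_commute)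
      then have "E \<le> 183 * l" using Ele dyh bx by (simp add: abs_minus_commute)
      then show "E / 183 \<le> l" by simp
    qed
    then show ?thesis by simp
  qed
  show "dcc p q / 183 \<le> E"
  proof -
    define \<beta> where "\<beta> = 2 * (snd q - snd p) / (fst p + fst q)"
    have "\<bar>\<beta>\<bar> = 2 * \<bar>snd q - snd p\<bar> / \<bar>fst p + fst q\<bar>" unfolding \<beta>_def by (simp only: abs_divide abs_mult abs_numeral)
    also have "\<dots> \<le> 2 * \<bar>snd q - snd p\<bar> / (2*h/9)"
      by (rule divide_left_mono) (use sge h s in auto)
    also have "\<dots> = 9 * \<bar>snd p / h - snd q / h\<bar>" using h dyh by (simp add: field_simps)
    finally have bb: "\<bar>\<beta>\<bar> \<le> 9 * \<bar>snd p / h - snd q / h\<bar>" .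
    have "\<beta>\<^sup>2 \<le> (9 * \<bar>snd p / h - snd q / h\<bar>)\<^sup>2"
      using bb by (metis abs_ge_zero power2_abs power_mono)
    moreover have "(9 * \<bar>snd p / h - snd q / h\<bar>)\<^sup>2 = 81 * (snd p / h - snd q / h)\<^sup>2"
      by (simp add: power_mult_distrib)
    moreover have "(fst q - fst p)\<^sup>2 = (fst p - fst q)\<^sup>2" by (simp add: power2_commute)
    moreover have "0 \<le> (fst p - fst q)\<^sup>2" by simp
    ultimately have "(fst q - fst p)\<^sup>2 + \<beta>\<^sup>2 \<le> 81 * ((fst p - fst q)\<^sup>2 + (snd p / h - snd q / h)\<^sup>2)"
      by (rule aux_ineq)
    then have "sqrt ((fst q - fst p)\<^sup>2 + \<beta>\<^sup>2) \<le> sqrt (81 * ((fst p - fst q)\<^sup>2 + (snd p / h - snd q / h)\<^sup>2))"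
      by (rule real_sqrt_le_mono)
    also have "\<dots> = 9 * E"
    proof -
      have s81: "sqrt 81 = (9::real)" by (rule real_sqrt_unique) auto
      show ?thesis unfolding E_def by (simp only: real_sqrt_mult s81)
    qed
    finally have "dcc p q \<le> 9 * E" using dcc_le[OF s] unfolding \<beta>_def by linarith
    moreover have "0 \<le> E" unfolding E_def by simp
    ultimately show ?thesis by simp
  qed
qed
lemma whitney_parts:
  assumes W: "whitney_family W" and QW: "Q \<in> W"
  shows "\<exists>j m n. Q = dyadic_rect j m n" "Q \<subseteq> Omega" "dist_cc Q axisA \<le> diam_cc Q"
proof -
  have W1: "\<forall>Q\<in>W. \<exists>j m n. Q = dyadic_rect j m n"
    using W unfolding whitney_family_def by (elim conjE) assumption
  have W2: "\<Union>W = Omega"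
    using W unfolding whitney_family_def by (elim conjE) assumption
  have W4: "\<forall>Q\<in>W. dist_cc Q axisA \<le> diam_cc Q \<and> diam_cc Q \<le> 8 * dist_cc Q axisA"
    using W unfolding whitney_family_def by (elim conjE) assumption
  show "\<exists>j m n. Q = dyadic_rect j m n" using W1 QW by (rule bspec)
  show "Q \<subseteq> Omega" using W2 QW by (metis Union_upper)
  show "dist_cc Q axisA \<le> diam_cc Q" using bspec[OF W4 QW] by (rule conjunct1)
qed

lemma rect_props:
  assumes W: "whitney_family W" and QW: "Q \<in> W"
  shows "\<exists>h>0. (\<forall>p\<in>Q. h \<le> \<bar>fst p\<bar> \<and> \<bar>fst p\<bar> \<le> 3*h) \<and>
           (\<forall>p\<in>Q. \<forall>q\<in>Q. \<bar>snd p - snd q\<bar> \<le> h\<^sup>2 \<and> 0 < fst p * fst q) \<and> Q \<noteq> {}"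
proof -
  obtain j m n where Qd: "Q = dyadic_rect j m n" using whitney_parts(1)[OF W QW] by blast
  have QO: "Q \<subseteq> Omega" using whitney_parts(2)[OF W QW] .
  have wh: "dist_cc Q axisA \<le> diam_cc Q" using whitney_parts(3)[OF W QW] .
  define h where "h = 2 powr (- real_of_int j)"
  have h0: "h > 0" unfolding h_def by simp
  have hsq: "2 powr (- 2 * real_of_int j) = h\<^sup>2"
    unfolding h_def power2_eq_square powr_add[symmetric] by (simp add: algebra_simps)
  have memQ: "p \<in> Q \<longleftrightarrow> h * m \<le> fst p \<and> fst p \<le> h * (m+1) \<and> h\<^sup>2 * n \<le> snd p \<and> snd p \<le> h\<^sup>2 * (n+1)" for p
    unfolding Qd dyadic_rect_def hsq h_def[symmetric] by (cases p) (simp add: mem_Times_iff)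
  have c: "(h*m, h\<^sup>2*n) \<in> Q" using h0 by (simp add: memQ)
  have xne: "fst p \<noteq> 0" if "p \<in> Q" for p using QO that unfolding Omega_def by auto
  have mcase: "m \<ge> 1 \<or> m \<le> -2"
  proof (rule ccontr)
    assume "\<not> ?thesis"
    then have "m = 0 \<or> m = -1" by auto
    then have "(0, h\<^sup>2*n) \<in> Q" using h0 by (auto simp: memQ)
    then show False using xne by fastforce
  qed
  define k where "k = (if m \<ge> 1 then real_of_int m else - real_of_int (m+1))"
  have k1: "k \<ge> 1" using mcase unfolding k_def by auto
  have xb: "h * k \<le> \<bar>fst p\<bar> \<and> \<bar>fst p\<bar> \<le> h * k + h" if "p \<in> Q" for p
  proof -
    have a: "h * m \<le> fst p" "fst p \<le> h * (m+1)" using that memQ by auto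
    show ?thesis
    proof (cases "m \<ge> 1")
      case True
      have "h * 1 \<le> h * m" using True h0 by (intro mult_left_mono) auto
      then show ?thesis using a True unfolding k_def by (auto simp: algebra_simps)
    next
      case False
      then have "m + 1 \<le> -1" using mcase by auto
      then have "h * (m+1) \<le> h * (-1)" using h0 by (intro mult_left_mono) auto
      then show ?thesis using a False unfolding k_def by (auto simp: algebra_simps)
    qed
  qed
  have sgn: "0 < fst p * fst q" if "p \<in> Q" "q \<in> Q" for p q
  proof (cases "m \<ge> 1")
    case True
    have hm: "h * 1 \<le> h * m" using True h0 by (intro mult_left_mono) auto
    have "h * m \<le> fst p" "h * m \<le> fst q" using that memQ by auto
    then have "0 < fst p" "0 < fst q" using hm h0 by linarith+
    then show ?thesis by simp
  next
    case False
    then have "m + 1 \<le> -1" using mcase by auto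
    then have hm: "h * (m+1) \<le> h * (-1)" using h0 by (intro mult_left_mono) auto
    have "fst p \<le> h * (m+1)" "fst q \<le> h * (m+1)" using that memQ by auto
    then have "fst p < 0" "fst q < 0" using hm h0 by linarith+
    then show ?thesis by (simp add: mult_neg_neg)
  qed
  have yb: "\<bar>snd p - snd q\<bar> \<le> h\<^sup>2" if "p \<in> Q" "q \<in> Q" for p q
    using that memQ by (auto simp: algebra_simps abs_le_iff)
  have "h * k \<le> dist_cc Q axisA"
    unfolding dist_cc_def
  proof (rule cInf_greatest)
    show "{dcc p q |p q. p \<in> Q \<and> q \<in> axisA} \<noteq> {}"
      using c by (auto simp: axisA_def)
    fix x assume "x \<in> {dcc p q |p q. p \<in> Q \<and> q \<in> axisA}"
    then obtain p q where pq: "x = dcc p q" "p \<in> Q" "q \<in> axisA" by blast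
    have q0: "fst q = 0" using pq(3) by (simp add: axisA_def)
    have "\<bar>fst q - fst p\<bar> \<le> dcc p q" by (rule dcc_ge_dx) (use q0 xne[OF pq(2)] in simp)
    then show "h * k \<le> x" using xb[OF pq(2)] q0 pq(1) by simp
  qed
  moreover have "diam_cc Q \<le> 2 * h"
    unfolding diam_cc_def
  proof (rule cSup_least)
    show "{dcc p q |p q. p \<in> Q \<and> q \<in> Q} \<noteq> {}" using c by blast
    fix x assume "x \<in> {dcc p q |p q. p \<in> Q \<and> q \<in> Q}"
    then obtain p q where pq: "x = dcc p q" "p \<in> Q" "q \<in> Q" by blast
    have sabs: "\<bar>fst p + fst q\<bar> = \<bar>fst p\<bar> + \<bar>fst q\<bar>"
      using sgn[OF pq(2,3)] by (cases "fst p > 0") (auto simp: zero_less_mult_iff)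
    have hk: "h \<le> h * k" using k1 h0 by simp
    have sge: "2 * h \<le> \<bar>fst p + fst q\<bar>" using sabs xb[OF pq(2)] xb[OF pq(3)] hk by linarith
    then have s: "fst p + fst q \<noteq> 0" using h0 by auto
    have dx: "\<bar>fst q - fst p\<bar> \<le> h" using xb[OF pq(2)] xb[OF pq(3)] memQ pq(2,3) by (auto simp: algebra_simps abs_le_iff)
    have "\<bar>2 * (snd q - snd p) / (fst p + fst q)\<bar> = 2 * \<bar>snd q - snd p\<bar> / \<bar>fst p + fst q\<bar>"
      by (simp only: abs_divide abs_mult abs_numeral)
    also have "\<dots> \<le> 2 * h\<^sup>2 / (2 * h)"
      by (rule frac_le) (use yb[OF pq(3,2)] sge h0 in auto)
    also have "\<dots> = h" using h0 by (simp add: power2_eq_square)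
    finally have bb: "\<bar>2 * (snd q - snd p) / (fst p + fst q)\<bar> \<le> h" .
    have "dcc p q \<le> sqrt ((fst q - fst p)\<^sup>2 + (2 * (snd q - snd p) / (fst p + fst q))\<^sup>2)"
      by (rule dcc_le[OF s])
    also have "\<dots> \<le> \<bar>fst q - fst p\<bar> + \<bar>2 * (snd q - snd p) / (fst p + fst q)\<bar>"
      by (rule sqrt_sum_squares_le_sum_abs)
    finally show "x \<le> 2 * h" using pq(1) dx bb by linarith
  qed
  ultimately have "h * k \<le> 2 * h" using wh by linarith
  then have x3: "\<bar>fst p\<bar> \<le> 3 * h" if "p \<in> Q" for p using xb[OF that] by linarith
  have hk1: "h * 1 \<le> h * k" using k1 h0 by (intro mult_left_mono) auto
  have x1: "h \<le> \<bar>fst p\<bar>" if "p \<in> Q" for p using xb[OF that] hk1 by linarith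
  show ?thesis using h0 x1 x3 yb sgn c by blast
qed
lemma sign_trans: "0 < (a::real) * b \<Longrightarrow> 0 < b * c \<Longrightarrow> 0 < a * c"
  by (auto simp: zero_less_mult_iff)

lemma star_props:
  assumes W: "whitney_family W" and QW: "Q \<in> W" and h0: "h > 0"
    and Qx: "\<forall>p\<in>Q. h \<le> \<bar>fst p\<bar> \<and> \<bar>fst p\<bar> \<le> 3*h"
    and Qy: "\<forall>p\<in>Q. \<forall>q\<in>Q. \<bar>snd p - snd q\<bar> \<le> h\<^sup>2 \<and> 0 < fst p * fst q"
    and p0: "p0 \<in> Q"
    and z: "z \<in> touching_union W (touching_union W Q)"
  shows "h/9 \<le> \<bar>fst z\<bar> \<and> \<bar>fst z\<bar> \<le> 27*h \<and> \<bar>snd z - snd p0\<bar> \<le> 91 * h\<^sup>2 \<and> 0 < fst z * fst p0"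
proof -
  obtain Q2 where Q2: "Q2 \<in> W" "Q2 \<inter> touching_union W Q \<noteq> {}" "z \<in> Q2"
    using z unfolding touching_union_def by blast
  obtain c2 where c2: "c2 \<in> Q2" "c2 \<in> touching_union W Q" using Q2(2) by blast
  obtain Q1 where Q1: "Q1 \<in> W" "Q1 \<inter> Q \<noteq> {}" "c2 \<in> Q1"
    using c2(2) unfolding touching_union_def by blast
  obtain c1 where c1: "c1 \<in> Q1" "c1 \<in> Q" using Q1(2) by blast
  obtain h1 where h1: "h1 > 0" "\<forall>p\<in>Q1. h1 \<le> \<bar>fst p\<bar> \<and> \<bar>fst p\<bar> \<le> 3*h1"
    "\<forall>p\<in>Q1. \<forall>q\<in>Q1. \<bar>snd p - snd q\<bar> \<le> h1\<^sup>2 \<and> 0 < fst p * fst q"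
    using rect_props[OF W Q1(1)] by blast
  obtain h2 where h2: "h2 > 0" "\<forall>p\<in>Q2. h2 \<le> \<bar>fst p\<bar> \<and> \<bar>fst p\<bar> \<le> 3*h2"
    "\<forall>p\<in>Q2. \<forall>q\<in>Q2. \<bar>snd p - snd q\<bar> \<le> h2\<^sup>2 \<and> 0 < fst p * fst q"
    using rect_props[OF W Q2(1)] by blast
  have a1: "h \<le> \<bar>fst c1\<bar>" "\<bar>fst c1\<bar> \<le> 3*h" "h1 \<le> \<bar>fst c1\<bar>" "\<bar>fst c1\<bar> \<le> 3*h1"
    using Qx c1 h1(2) by auto
  have a2: "h1 \<le> \<bar>fst c2\<bar>" "\<bar>fst c2\<bar> \<le> 3*h1" "h2 \<le> \<bar>fst c2\<bar>" "\<bar>fst c2\<bar> \<le> 3*h2"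
    using Q1(3) c2(1) h1(2) h2(2) by auto
  have az: "h2 \<le> \<bar>fst z\<bar>" "\<bar>fst z\<bar> \<le> 3*h2" using Q2(3) h2(2) by auto
  have hh2: "h2 \<le> 9*h" "h \<le> 9*h2" using a1 a2 by linarith+
  have y1: "\<bar>snd c1 - snd p0\<bar> \<le> h\<^sup>2" using Qy c1(2) p0 by blast
  have y2: "\<bar>snd c2 - snd c1\<bar> \<le> h1\<^sup>2" using h1(3) Q1(3) c1(1) by blast
  have y3: "\<bar>snd z - snd c2\<bar> \<le> h2\<^sup>2" using h2(3) Q2(3) c2(1) by blast
  have "h1\<^sup>2 \<le> (3*h)\<^sup>2" using a1 h1(1) by (intro power_mono) linarith+
  then have s1: "h1\<^sup>2 \<le> 9*h\<^sup>2" by (simp add: power_mult_distrib)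
  have "h2\<^sup>2 \<le> (9*h)\<^sup>2" using hh2 h2(1) by (intro power_mono) linarith+
  then have s2: "h2\<^sup>2 \<le> 81*h\<^sup>2" by (simp add: power_mult_distrib)
  have "\<bar>snd z - snd p0\<bar> \<le> 91 * h\<^sup>2" using y1 y2 y3 s1 s2 by linarith
  moreover have "0 < fst z * fst p0"
  proof -
    have "0 < fst z * fst c2" using h2(3) Q2(3) c2(1) by blast
    moreover have "0 < fst c2 * fst c1" using h1(3) Q1(3) c1(1) by blast
    moreover have "0 < fst c1 * fst p0" using Qy c1(2) p0 by blast
    ultimately show ?thesis using sign_trans by blast
  qed
  ultimately show ?thesis using az hh2 by auto
qed

theorem lemma4p8:
  fixes W :: "(real \<times> real) set set"
  assumes "whitney_family W"
  shows "\<exists>L::real. L \<ge> 1 \<and> (\<exists>N::nat. \<forall>Q\<in>W. \<exists>f.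
           bilip_embedding L N (touching_union W (touching_union W Q)) f)"
proof -
  have "\<exists>f. bilip_embedding 183 2 (touching_union W (touching_union W Q)) f" if QW: "Q \<in> W" for Q
  proof -
  obtain h where h0: "h > 0" and Qx: "\<forall>p\<in>Q. h \<le> \<bar>fst p\<bar> \<and> \<bar>fst p\<bar> \<le> 3*h"
    and Qy: "\<forall>p\<in>Q. \<forall>q\<in>Q. \<bar>snd p - snd q\<bar> \<le> h\<^sup>2 \<and> 0 < fst p * fst q" and Qne: "Q \<noteq> {}"
    using rect_props[OF assms QW] by blast
  obtain p0 where p0: "p0 \<in> Q" using Qne by blast
  define f where "f = (\<lambda>(p::real\<times>real) (i::nat). if i = 0 then fst p else snd p / h)"
  have "bilip_embedding 183 2 (touching_union W (touching_union W Q)) f"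
    unfolding bilip_embedding_def
  proof (intro ballI)
    fix p q assume p: "p \<in> touching_union W (touching_union W Q)"
      and q: "q \<in> touching_union W (touching_union W Q)"
    note P = star_props[OF assms QW h0 Qx Qy p0 p]
    note R = star_props[OF assms QW h0 Qx Qy p0 q]
    have dy: "\<bar>snd p - snd q\<bar> \<le> 182 * h\<^sup>2" using P R by linarith
    have sg: "0 < fst p * fst q"
    proof -
      have "0 < fst q * fst p0" using R by blast
      then have "0 < fst p0 * fst q" by (simp add: mult.commute)
      then show ?thesis using P sign_trans by blast
    qed
    have e: "eucl_dist 2 (f p) (f q) = sqrt ((fst p - fst q)\<^sup>2 + (snd p / h - snd q / h)\<^sup>2)"
      unfolding eucl_dist_def f_def by (simp add: numeral_2_eq_2 lessThan_Suc)
    show "dcc p q / 183 \<le> eucl_dist 2 (f p) (f q) \<and> eucl_dist 2 (f p) (f q) \<le> 183 * dcc p q"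
      unfolding e by (rule region[OF h0]) (use P R sg dy in auto)
  qed
  then show ?thesis by blast
  qed
  then show ?thesis by (intro exI[of _ "183::real"] conjI exI[of _ "2::nat"]) auto
qed

end
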